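(* Let $\Bbbk$ be an algebraically closed field of characteristic $0$ and let $G \simeq C_m \times C_{lm}$ (with $m, l$ positive integers) be a finite abelian subgroup of $\mathrm{SL}_3(\Bbbk)$, where the embedding is given by the representation $\rho = \chi_1 \oplus \chi_2 \oplus \chi_3$ with $\chi_1,\chi_2,\chi_3$ one-dimensional characters of $G$. Suppose that no $\chi_i$ is the trivial character and that $|G| > 4$. Then there exists a direct product decomposition $G = H \times K$ with $H$ cyclic such that none of the restrictions $\chi_i|_H$ ($i=1,2,3$) is trivial.
   Context: $C_r$ denotes the cyclic group of order $r$. *)

theory Defs
  imports "HOL-Algebra.Algebra" "HOL-Computational_Algebra.Polynomial"
begin

definition alg_closed_type :: "'k::field itself \<Rightarrow> bool" where
  "alg_closed_type _ \<longleftrightarrow> (\<forall>p::'k poly. degree p > 0 \<longrightarrow> (\<exists>x. poly p x = 0))"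

definition character :: "('g, 'b) monoid_scheme \<Rightarrow> ('g \<Rightarrow> 'k::field) \<Rightarrow> bool" where
  "character G \<chi> \<longleftrightarrow> (\<forall>x\<in>carrier G. \<chi> x \<noteq> 0) \<and>
     (\<forall>x\<in>carrier G. \<forall>y\<in>carrier G. \<chi> (x \<otimes>\<^bsub>G\<^esub> y) = \<chi> x * \<chi> y)"

definition trivial_on :: "('g \<Rightarrow> 'k::field) \<Rightarrow> 'g set \<Rightarrow> bool" where
  "trivial_on \<chi> H \<longleftrightarrow> (\<forall>h\<in>H. \<chi> h = 1)"

end

theory Submission
  imports Defs
begin


context comm_group begin

lemma decomp:
  assumes fin: "finite (carrier G)" and p: "p \<in> carrier G" and q: "q \<in> carrier G"
    and N: "(N::nat) > 0" "p [^] N = \<one>"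
    and rep: "\<forall>g\<in>carrier G. \<exists>(x::nat) (y::nat). g = p[^]x \<otimes> q[^]y"
    and uniq: "\<forall>(x::nat) (y::nat). p[^]x \<otimes> q[^]y = \<one> \<longrightarrow> q[^]y = \<one>"
    and ordpq: "a = 0 \<or> (\<forall>k::nat. q[^]k = \<one> \<longrightarrow> p[^]k = \<one>)"
    and h: "h = p[^](a::nat) \<otimes> q"
  shows "subgroup (generate G {h}) G \<and> subgroup (generate G {p}) G
     \<and> generate G {h} \<inter> generate G {p} = {\<one>}
     \<and> generate G {h} <#> generate G {p} = carrier G
     \<and> cyclic_group (subgroup_generated G (generate G {h}))"
proof -
  have hc: "h \<in> carrier G" using h p q by simp
  have Hh: "generate G {h} = {h[^]k | k. k \<in> (UNIV::nat set)}"
    by (rule generate_pow_on_finite_carrier[OF fin hc])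
  have Hp: "generate G {p} = {p[^]k | k. k \<in> (UNIV::nat set)}"
    by (rule generate_pow_on_finite_carrier[OF fin p])
  have sH: "subgroup (generate G {h}) G" using hc by (simp add: generate_is_subgroup)
  have sP: "subgroup (generate G {p}) G" using p by (simp add: generate_is_subgroup)
  have hpow: "h[^]k = p[^](a*k) \<otimes> q[^]k" for k :: nat
    using p q by (simp add: h nat_pow_distrib nat_pow_pow)
  have inter: "generate G {h} \<inter> generate G {p} = {\<one>}"
  proof
    show "{\<one>} \<subseteq> generate G {h} \<inter> generate G {p}"
      using sH sP by (simp add: subgroup.one_closed)
  next
    show "generate G {h} \<inter> generate G {p} \<subseteq> {\<one>}"
    proof
      fix z assume "z \<in> generate G {h} \<inter> generate G {p}"
      then obtain k j :: nat where zk: "z = h[^]k" and zj: "z = p[^]j" using Hh Hp by blast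
      have "p[^](a*k + j*(N-1)) \<otimes> q[^]k = p[^](j*(N-1)) \<otimes> (p[^](a*k) \<otimes> q[^]k)"
        using p q by (simp add: nat_pow_mult[symmetric] m_ac)
      also have "\<dots> = p[^](j*(N-1)) \<otimes> p[^]j" using zk zj hpow by simp
      also have "\<dots> = p[^](N*j)" using p N(1) by (simp add: nat_pow_mult algebra_simps)
      also have "\<dots> = \<one>" using p N by (simp add: nat_pow_pow[symmetric])
      finally have qk: "q[^]k = \<one>" by (rule uniq[rule_format])
      have "z = p[^](a*k)" using zk hpow qk p by simp
      also have "\<dots> = \<one>"
      proof (cases "a = 0")
        case False
        then have "p[^]k = \<one>" using ordpq qk by blast
        then show ?thesis using p by (metis nat_pow_pow mult.commute nat_pow_one)
      qed simp
      finally show "z \<in> {\<one>}" by simp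
    qed
  qed
  have prod: "generate G {h} <#> generate G {p} = carrier G"
  proof
    show "generate G {h} <#> generate G {p} \<subseteq> carrier G"
      using sH sP by (auto simp: set_mult_def subgroup.mem_carrier)
  next
    show "carrier G \<subseteq> generate G {h} <#> generate G {p}"
    proof
      fix g assume "g \<in> carrier G"
      then obtain x y :: nat where g: "g = p[^]x \<otimes> q[^]y" using rep by blast
      have ar: "a*y + (x + a*y*(N-1)) = x + N*(a*y)" using N(1) by (cases N) (auto simp: algebra_simps)
      have "h[^]y \<otimes> p[^](x + a*y*(N-1)) = q[^]y \<otimes> (p[^](a*y) \<otimes> p[^](x + a*y*(N-1)))"
        using p q by (simp add: hpow m_ac)
      also have "\<dots> = q[^]y \<otimes> p[^](a*y + (x + a*y*(N-1)))"
        using p q by (simp add: nat_pow_mult)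
      also have "\<dots> = q[^]y \<otimes> p[^](x + N*(a*y))" by (simp only: ar)
      also have "\<dots> = q[^]y \<otimes> (p[^]x \<otimes> (p[^]N)[^](a*y))"
        using p q by (simp add: nat_pow_mult nat_pow_pow)
      also have "\<dots> = g" using g p q N by (simp add: m_ac)
      finally have "g = h[^]y \<otimes> p[^](x + a*y*(N-1))" by simp
      moreover have "h[^]y \<in> generate G {h}" using Hh by blast
      moreover have "p[^](x + a*y*(N-1)) \<in> generate G {p}" using Hp by blast
      ultimately show "g \<in> generate G {h} <#> generate G {p}"
        by (auto simp: set_mult_def)
    qed
  qed
  have c1: "carrier (subgroup_generated G (generate G {h})) = generate G {h}"
    by (rule subgroup.carrier_subgroup_generated_subgroup[OF sH])
  have c1': "generate G (carrier G \<inter> generate G {h}) = generate G {h}"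
    using c1 by (simp only: carrier_subgroup_generated)
  have c2': "generate G (carrier G \<inter> {h}) = generate G {h}"
    using hc by (simp add: Int_insert_right)
  have "subgroup_generated G (generate G {h}) = subgroup_generated G {h}"
    unfolding subgroup_generated_def c1' c2' ..
  then have cyc: "cyclic_group (subgroup_generated G (generate G {h}))"
    by (simp add: cyclic_group_generated)
  show ?thesis using sH sP inter prod cyc by blast
qed

end


context group begin

lemma char_one:
  assumes "character G \<chi>"
  shows "\<chi> \<one> = 1"
proof -
  have "\<chi> (\<one> \<otimes> \<one>) = \<chi> \<one> * \<chi> \<one>" using assms one_closed unfolding character_def by blast
  then have "\<chi> \<one> * 1 = \<chi> \<one> * \<chi> \<one>" by simp
  moreover have "\<chi> \<one> \<noteq> 0" using assms one_closed unfolding character_def by blast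
  ultimately show ?thesis by (metis mult_left_cancel)
qed

lemma char_pow:
  assumes "character G \<chi>" "g \<in> carrier G"
  shows "\<chi> (g [^] (k::nat)) = \<chi> g ^ k"
proof (induction k)
  case 0 then show ?case using char_one[OF assms(1)] by simp
next
  case (Suc k) then show ?case using assms by (simp add: character_def)
qed

lemma char_ev:
  assumes "character G \<chi>" "g1 \<in> carrier G" "g2 \<in> carrier G"
  shows "\<chi> (g1 [^] (x::nat) \<otimes> g2 [^] (y::nat)) = \<chi> g1 ^ x * \<chi> g2 ^ y"
  using assms char_pow[OF assms(1)] by (simp add: character_def)

end

context comm_group begin

lemma case3:
  fixes \<chi>i \<chi>j \<chi>k :: "'a \<Rightarrow> 'k::field"
  assumes g1: "g1 \<in> carrier G" and g2: "g2 \<in> carrier G" and m: "m > 0" and l: "l > 0"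
    and uniq: "\<forall>(x::nat) (y::nat). g1[^]x \<otimes> g2[^]y = \<one> \<longleftrightarrow> m dvd x \<and> l*m dvd y"
    and rep: "\<forall>g\<in>carrier G. \<exists>(x::nat) (y::nat). g = g1[^]x \<otimes> g2[^]y"
    and ci: "character G \<chi>i" and cj: "character G \<chi>j" and ck: "character G \<chi>k"
    and faith: "\<forall>g\<in>carrier G. \<chi>i g = 1 \<and> \<chi>j g = 1 \<and> \<chi>k g = 1 \<longrightarrow> g = \<one>"
    and SL: "\<forall>g\<in>carrier G. \<chi>i g * \<chi>j g * \<chi>k g = 1"
    and nti: "\<not> trivial_on \<chi>i (carrier G)" and ntj: "\<not> trivial_on \<chi>j (carrier G)"
    and big: "m * (l*m) > 4"
    and bi: "\<chi>i g2 = 1" and aj: "\<chi>j g1 = 1"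
  shows "\<exists>a::nat. \<chi>i (g1[^]a \<otimes> g2) \<noteq> 1 \<and> \<chi>j (g1[^]a \<otimes> g2) \<noteq> 1 \<and> \<chi>k (g1[^]a \<otimes> g2) \<noteq> 1"
proof -
  have grp: "group G" by (rule is_group)
  note evi = char_ev[OF ci g1 g2] and evj = char_ev[OF cj g1 g2] and evk = char_ev[OF ck g1 g2]
  define A where "A = \<chi>i g1"
  define B where "B = \<chi>j g2"
  have A1: "A \<noteq> 1"
  proof
    assume "A = 1"
    have "trivial_on \<chi>i (carrier G)" unfolding trivial_on_def
    proof
      fix g assume "g \<in> carrier G"
      then obtain x y :: nat where "g = g1[^]x \<otimes> g2[^]y" using rep by blast
      then show "\<chi>i g = 1" using evi \<open>A = 1\<close> bi A_def by simp
    qed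
    then show False using nti by simp
  qed
  have B1: "B \<noteq> 1"
  proof
    assume "B = 1"
    have "trivial_on \<chi>j (carrier G)" unfolding trivial_on_def
    proof
      fix g assume "g \<in> carrier G"
      then obtain x y :: nat where "g = g1[^]x \<otimes> g2[^]y" using rep by blast
      then show "\<chi>j g = 1" using evj \<open>B = 1\<close> aj B_def by simp
    qed
    then show False using ntj by simp
  qed
  have hc: "g1[^](a::nat) \<otimes> g2 \<in> carrier G" for a using g1 g2 by simp
  have hev: "g1[^](a::nat) \<otimes> g2 = g1[^]a \<otimes> g2[^](1::nat)" for a using g2 by simp
  have chi_h: "\<chi>i (g1[^](a::nat) \<otimes> g2) = A^a" for a
    using evi[of a 1] hev[of a] bi A_def by simp
  have chj_h: "\<chi>j (g1[^](a::nat) \<otimes> g2) = B" for a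
    using evj[of a 1] hev[of a] aj B_def by simp
  have SLh: "A^a * B * \<chi>k (g1[^](a::nat) \<otimes> g2) = 1" for a
    using SL hc[of a] chi_h[of a] chj_h[of a] by metis
  show ?thesis
  proof (cases "A * B = 1")
    case False
    have "\<chi>k (g1[^](1::nat) \<otimes> g2) \<noteq> 1" using SLh[of 1] False by auto
    moreover have "\<chi>i (g1[^](1::nat) \<otimes> g2) \<noteq> 1" using chi_h[of 1] A1 by simp
    moreover have "\<chi>j (g1[^](1::nat) \<otimes> g2) \<noteq> 1" using chj_h[of 1] B1 by simp
    ultimately show ?thesis by blast
  next
    case True
    have k2: "\<chi>k (g1[^](2::nat) \<otimes> g2) \<noteq> 1"
    proof
      assume "\<chi>k (g1[^](2::nat) \<otimes> g2) = 1"
      then have "A^2 * B = 1" using SLh[of 2] by simp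
      then have "A * (A * B) = 1" by (simp add: power2_eq_square algebra_simps)
      then show False using True A1 by simp
    qed
    have A2: "A^2 \<noteq> 1"
    proof
      assume A2: "A^2 = 1"
      have e1: "g1[^](2::nat) = g1[^](2::nat) \<otimes> g2[^](0::nat)" using g1 by simp
      have "\<chi>i (g1[^](2::nat)) = 1" using char_pow[OF ci g1] A2 A_def by simp
      moreover have "\<chi>j (g1[^](2::nat)) = 1" using char_pow[OF cj g1] aj by simp
      moreover have "g1[^](2::nat) \<in> carrier G" using g1 by simp
      ultimately have "\<chi>k (g1[^](2::nat)) = 1" using SL by (metis mult_1)
      then have "g1[^](2::nat) = \<one>"
        using faith g1 \<open>\<chi>i (g1[^](2::nat)) = 1\<close> \<open>\<chi>j (g1[^](2::nat)) = 1\<close> by simp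
      then have "m dvd 2" using uniq e1 by metis
      then have m2: "m \<le> 2" by (simp add: dvd_imp_le)
      have "g1[^]m \<otimes> g2[^](0::nat) = \<one>" using uniq[rule_format, of m 0] by simp
      then have g1m: "g1[^]m = \<one>" using g1 by simp
      have Am: "A^m = 1" using char_pow[OF ci g1, of m] g1m char_one[OF ci] A_def by simp
      have "(A*B)^m = 1" using True by simp
      then have Bm: "B^m = 1" using Am by (simp add: power_mult_distrib)
      have "\<chi>i (g2[^]m) = 1" using char_pow[OF ci g2] bi by simp
      moreover have "\<chi>j (g2[^]m) = 1" using char_pow[OF cj g2] Bm B_def by simp
      moreover have "g2[^]m \<in> carrier G" using g2 by simp
      ultimately have "\<chi>k (g2[^]m) = 1" using SL by (metis mult_1)
      then have "g2[^]m = \<one>"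
        using faith g2 \<open>\<chi>i (g2[^]m) = 1\<close> \<open>\<chi>j (g2[^]m) = 1\<close> by simp
      then have "g1[^](0::nat) \<otimes> g2[^]m = \<one>" using g2 by simp
      then have "l*m dvd m" using uniq by blast
      then have "l*m \<le> m" using m by (simp add: dvd_imp_le)
      then have "l \<le> 1" using m by simp
      then have "l = 1" using l by simp
      moreover have "m * m \<le> 2 * 2" using mult_le_mono[OF m2 m2] .
      ultimately show False using big by simp
    qed
    show ?thesis
      apply (rule exI[of _ "2::nat"])
      using chi_h[of 2] chj_h[of 2] A2 B1 k2 by simp
  qed
qed

end


lemma DirProd_pow_nat:
  "(a, b) [^]\<^bsub>G \<times>\<times> H\<^esub> (k::nat) = (a [^]\<^bsub>G\<^esub> k, b [^]\<^bsub>H\<^esub> k)"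
  by (induction k) simp_all

theorem lemma3p6:
  fixes G :: "('g, 'b) monoid_scheme"
    and \<chi>1 \<chi>2 \<chi>3 :: "'g \<Rightarrow> 'k::field_char_0"
    and m l :: nat
  assumes "alg_closed_type TYPE('k)"
    and "comm_group G"
    and "m > 0" and "l > 0"
    and "G \<cong> DirProd (integer_mod_group m) (integer_mod_group (l * m))"
    and "character G \<chi>1" and "character G \<chi>2" and "character G \<chi>3"
    and faithful: "\<forall>g\<in>carrier G. \<chi>1 g = 1 \<and> \<chi>2 g = 1 \<and> \<chi>3 g = 1 \<longrightarrow> g = \<one>\<^bsub>G\<^esub>"
    and SL: "\<forall>g\<in>carrier G. \<chi>1 g * \<chi>2 g * \<chi>3 g = 1"
    and "\<not> trivial_on \<chi>1 (carrier G)" and "\<not> trivial_on \<chi>2 (carrier G)"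
    and "\<not> trivial_on \<chi>3 (carrier G)"
    and "card (carrier G) > 4"
  shows "\<exists>H K. subgroup H G \<and> subgroup K G \<and> H \<inter> K = {\<one>\<^bsub>G\<^esub>}
           \<and> H <#>\<^bsub>G\<^esub> K = carrier G
           \<and> cyclic_group (subgroup_generated G H)
           \<and> \<not> trivial_on \<chi>1 H \<and> \<not> trivial_on \<chi>2 H \<and> \<not> trivial_on \<chi>3 H"

proof -
  note ch1 = assms(6) and ch2 = assms(7) and ch3 = assms(8)
  note nt1 = assms(11) and nt2 = assms(12) and nt3 = assms(13)
  interpret G: comm_group G by fact
  have m: "m > 0" and l: "l > 0" using assms by auto
  define P where "P = DirProd (integer_mod_group m) (integer_mod_group (l*m))"
  have grpP: "group P" unfolding P_def by (simp add: DirProd_group)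
  obtain \<phi> where \<phi>: "\<phi> \<in> iso G P" using assms(5) unfolding is_iso_def P_def by blast
  define \<psi> where "\<psi> = inv_into (carrier G) \<phi>"
  have \<psi>: "\<psi> \<in> iso P G" unfolding \<psi>_def by (rule G.iso_set_sym[OF \<phi>])
  have \<psi>hom: "\<psi> \<in> hom P G" and \<psi>bij: "bij_betw \<psi> (carrier P) (carrier G)"
    using \<psi> by (auto simp: iso_def)
  interpret PG: group_hom P G \<psi>
    using grpP \<psi>hom G.is_group by (simp add: group_hom_def group_hom_axioms_def)
  have carrP: "carrier P = {0..<int m} \<times> {0..<int (l*m)}"
    using m l by (simp add: P_def carrier_integer_mod_group)
  define u where "u = (1 mod int m, 0::int)"
  define v where "v = (0::int, 1 mod int (l*m))"
  have uP: "u \<in> carrier P" using m l by (simp add: carrP u_def)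
  have vP: "v \<in> carrier P" using m l by (simp add: carrP v_def)
  define g1 where "g1 = \<psi> u"
  define g2 where "g2 = \<psi> v"
  have g1: "g1 \<in> carrier G" and g2: "g2 \<in> carrier G" using uP vP by (auto simp: g1_def g2_def)
  have key: "\<psi> (int x mod int m, int y mod int (l*m)) = g1[^]\<^bsub>G\<^esub>x \<otimes>\<^bsub>G\<^esub> g2[^]\<^bsub>G\<^esub>y" for x y :: nat
  proof -
    have "u [^]\<^bsub>P\<^esub> x \<otimes>\<^bsub>P\<^esub> v [^]\<^bsub>P\<^esub> y = (int x mod int m, int y mod int (l*m))"
      by (simp add: P_def u_def v_def DirProd_pow_nat mod_mult_right_eq)
    then have "\<psi> (int x mod int m, int y mod int (l*m)) = \<psi> (u [^]\<^bsub>P\<^esub> x \<otimes>\<^bsub>P\<^esub> v [^]\<^bsub>P\<^esub> y)" by simp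
    also have "\<dots> = g1[^]\<^bsub>G\<^esub>x \<otimes>\<^bsub>G\<^esub> g2[^]\<^bsub>G\<^esub>y"
      using uP vP by (simp add: PG.hom_nat_pow g1_def g2_def)
    finally show ?thesis .
  qed
  have rep: "\<forall>g\<in>carrier G. \<exists>(x::nat) (y::nat). g = g1[^]\<^bsub>G\<^esub>x \<otimes>\<^bsub>G\<^esub> g2[^]\<^bsub>G\<^esub>y"
  proof
    fix g assume "g \<in> carrier G"
    then obtain p where p: "p \<in> carrier P" "g = \<psi> p" using \<psi>bij by (metis bij_betw_imp_surj_on imageE)
    obtain a b where ab: "p = (a, b)" by (cases p)
    have a: "0 \<le> a" "a < int m" and b: "0 \<le> b" "b < int (l*m)" using p(1) ab carrP by auto
    have "int (nat a) mod int m = a" using a by simp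
    moreover have "int (nat b) mod int (l*m) = b" using b by simp
    ultimately have "g = g1[^]\<^bsub>G\<^esub>(nat a) \<otimes>\<^bsub>G\<^esub> g2[^]\<^bsub>G\<^esub>(nat b)"
      using key[of "nat a" "nat b"] p ab by simp
    then show "\<exists>(x::nat) (y::nat). g = g1[^]\<^bsub>G\<^esub>x \<otimes>\<^bsub>G\<^esub> g2[^]\<^bsub>G\<^esub>y" by blast
  qed
  have uniq: "\<forall>(x::nat) (y::nat). g1[^]\<^bsub>G\<^esub>x \<otimes>\<^bsub>G\<^esub> g2[^]\<^bsub>G\<^esub>y = \<one>\<^bsub>G\<^esub> \<longleftrightarrow> m dvd x \<and> l*m dvd y"
  proof (intro allI)
    fix x y :: nat
    have one: "\<one>\<^bsub>G\<^esub> = \<psi> (0, 0)" using PG.hom_one by (simp add: P_def)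
    have inP: "(int x mod int m, int y mod int (l*m)) \<in> carrier P" using m l by (simp add: carrP)
    have zP: "(0::int, 0::int) \<in> carrier P" using m l by (simp add: carrP)
    have inj: "inj_on \<psi> (carrier P)" using \<psi>bij by (simp add: bij_betw_def)
    have "g1[^]\<^bsub>G\<^esub>x \<otimes>\<^bsub>G\<^esub> g2[^]\<^bsub>G\<^esub>y = \<one>\<^bsub>G\<^esub> \<longleftrightarrow> (int x mod int m, int y mod int (l*m)) = (0, 0)"
      using inj_on_eq_iff[OF inj inP zP] key[of x y] one by simp
    also have "\<dots> \<longleftrightarrow> m dvd x \<and> l*m dvd y"
      by (simp add: mod_eq_0_iff_dvd del: of_nat_mult)
    finally show "g1[^]\<^bsub>G\<^esub>x \<otimes>\<^bsub>G\<^esub> g2[^]\<^bsub>G\<^esub>y = \<one>\<^bsub>G\<^esub> \<longleftrightarrow> m dvd x \<and> l*m dvd y" .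
  qed
  have cardG: "card (carrier G) = m * (l*m)"
  proof -
    have "card (carrier G) = card (carrier P)" using \<psi>bij by (simp add: bij_betw_same_card)
    also have "\<dots> = m * (l*m)" by (simp add: carrP card_cartesian_product nat_mult_distrib)
    finally show ?thesis .
  qed
  have big: "m * (l*m) > 4" using cardG assms(14) by simp
  have fin: "finite (carrier G)" using assms(14) card.infinite by fastforce
  have g1m: "g1[^]\<^bsub>G\<^esub>m = \<one>\<^bsub>G\<^esub>" using uniq[rule_format, of m 0] g1 by simp
  have g2n: "g2[^]\<^bsub>G\<^esub>(l*m) = \<one>\<^bsub>G\<^esub>" using uniq[rule_format, of 0 "l*m"] g2 by simp
  have triv: "trivial_on \<chi> (carrier G)" if "character G \<chi>" "\<chi> g1 = 1" "\<chi> g2 = 1" for \<chi> :: "'g \<Rightarrow> 'k"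
    unfolding trivial_on_def
  proof
    fix g assume "g \<in> carrier G"
    then obtain x y :: nat where "g = g1[^]\<^bsub>G\<^esub>x \<otimes>\<^bsub>G\<^esub> g2[^]\<^bsub>G\<^esub>y" using rep by blast
    then show "\<chi> g = 1" using G.char_ev[OF that(1) g1 g2] that by simp
  qed
  have concl: "?thesis" if "\<chi>1 h \<noteq> 1" "\<chi>2 h \<noteq> 1" "\<chi>3 h \<noteq> 1"
    and D: "subgroup (generate G {h}) G \<and> subgroup K G \<and> generate G {h} \<inter> K = {\<one>\<^bsub>G\<^esub>}
     \<and> generate G {h} <#>\<^bsub>G\<^esub> K = carrier G
     \<and> cyclic_group (subgroup_generated G (generate G {h}))" for h K
  proof -
    have "h \<in> generate G {h}" by (simp add: generate.incl)
    then have "\<not> trivial_on \<chi>1 (generate G {h}) \<and> \<not> trivial_on \<chi>2 (generate G {h}) \<and> \<not> trivial_on \<chi>3 (generate G {h})"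
      using that(1-3) unfolding trivial_on_def by blast
    then show ?thesis using D by blast
  qed
  have ordpq: "\<forall>k::nat. g2[^]\<^bsub>G\<^esub>k = \<one>\<^bsub>G\<^esub> \<longrightarrow> g1[^]\<^bsub>G\<^esub>k = \<one>\<^bsub>G\<^esub>"
  proof (intro allI impI)
    fix k :: nat assume "g2[^]\<^bsub>G\<^esub>k = \<one>\<^bsub>G\<^esub>"
    then have "g1[^]\<^bsub>G\<^esub>(0::nat) \<otimes>\<^bsub>G\<^esub> g2[^]\<^bsub>G\<^esub>k = \<one>\<^bsub>G\<^esub>" using g2 by simp
    then have "l*m dvd k" using uniq by blast
    then have "m dvd k" using dvd_mult_right by blast
    then show "g1[^]\<^bsub>G\<^esub>k = \<one>\<^bsub>G\<^esub>" using uniq[rule_format, of k 0] g1 by simp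
  qed
  have uniq12: "\<forall>(x::nat) (y::nat). g1[^]\<^bsub>G\<^esub>x \<otimes>\<^bsub>G\<^esub> g2[^]\<^bsub>G\<^esub>y = \<one>\<^bsub>G\<^esub> \<longrightarrow> g2[^]\<^bsub>G\<^esub>y = \<one>\<^bsub>G\<^esub>"
  proof (intro allI impI)
    fix x y :: nat assume "g1[^]\<^bsub>G\<^esub>x \<otimes>\<^bsub>G\<^esub> g2[^]\<^bsub>G\<^esub>y = \<one>\<^bsub>G\<^esub>"
    then have "l*m dvd y" using uniq by blast
    then show "g2[^]\<^bsub>G\<^esub>y = \<one>\<^bsub>G\<^esub>" using uniq[rule_format, of 0 y] g2 by simp
  qed
  have uniq21: "\<forall>(x::nat) (y::nat). g2[^]\<^bsub>G\<^esub>x \<otimes>\<^bsub>G\<^esub> g1[^]\<^bsub>G\<^esub>y = \<one>\<^bsub>G\<^esub> \<longrightarrow> g1[^]\<^bsub>G\<^esub>y = \<one>\<^bsub>G\<^esub>"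
  proof (intro allI impI)
    fix x y :: nat assume "g2[^]\<^bsub>G\<^esub>x \<otimes>\<^bsub>G\<^esub> g1[^]\<^bsub>G\<^esub>y = \<one>\<^bsub>G\<^esub>"
    then have "g1[^]\<^bsub>G\<^esub>y \<otimes>\<^bsub>G\<^esub> g2[^]\<^bsub>G\<^esub>x = \<one>\<^bsub>G\<^esub>" using g1 g2 by (simp add: G.m_comm)
    then have "m dvd y" using uniq by blast
    then show "g1[^]\<^bsub>G\<^esub>y = \<one>\<^bsub>G\<^esub>" using uniq[rule_format, of y 0] g1 by simp
  qed
  have rep21: "\<forall>g\<in>carrier G. \<exists>(x::nat) (y::nat). g = g2[^]\<^bsub>G\<^esub>x \<otimes>\<^bsub>G\<^esub> g1[^]\<^bsub>G\<^esub>y"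
    using rep g1 g2 by (metis G.m_comm G.nat_pow_closed)
  have famA: "?thesis" if "\<chi>1 (g1[^]\<^bsub>G\<^esub>a \<otimes>\<^bsub>G\<^esub> g2) \<noteq> 1" "\<chi>2 (g1[^]\<^bsub>G\<^esub>a \<otimes>\<^bsub>G\<^esub> g2) \<noteq> 1"
     "\<chi>3 (g1[^]\<^bsub>G\<^esub>a \<otimes>\<^bsub>G\<^esub> g2) \<noteq> 1" for a :: nat
    using concl[OF that G.decomp[OF fin g1 g2 m g1m rep uniq12, of a, OF _ refl]] ordpq by blast
  show ?thesis
  proof (cases "\<chi>1 g2 \<noteq> 1 \<and> \<chi>2 g2 \<noteq> 1 \<and> \<chi>3 g2 \<noteq> 1")
    case True
    then show ?thesis using famA[of 0] g2 by simp
  next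
    case c1: False
    show ?thesis
    proof (cases "\<chi>1 g1 \<noteq> 1 \<and> \<chi>2 g1 \<noteq> 1 \<and> \<chi>3 g1 \<noteq> 1")
      case True
      have lm: "l*m > 0" using m l by simp
      have "g2[^]\<^bsub>G\<^esub>(0::nat) \<otimes>\<^bsub>G\<^esub> g1 = g1" using g1 g2 by simp
      then show ?thesis
        using concl[of g1 "generate G {g2}"] True
          G.decomp[OF fin g2 g1 lm g2n rep21 uniq21, of 0 g1] by simp
    next
      case c2: False
      have c1': "\<chi>1 g2 = 1 \<or> \<chi>2 g2 = 1 \<or> \<chi>3 g2 = 1" using c1 by blast
      have c2': "\<chi>1 g1 = 1 \<or> \<chi>2 g1 = 1 \<or> \<chi>3 g1 = 1" using c2 by blast
      have n1: "\<not> (\<chi>1 g1 = 1 \<and> \<chi>1 g2 = 1)" using triv[OF ch1] nt1 by blast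
      have n2: "\<not> (\<chi>2 g1 = 1 \<and> \<chi>2 g2 = 1)" using triv[OF ch2] nt2 by blast
      have n3: "\<not> (\<chi>3 g1 = 1 \<and> \<chi>3 g2 = 1)" using triv[OF ch3] nt3 by blast
      have k12: "?thesis" if hb: "\<chi>1 g2 = 1" and ha: "\<chi>2 g1 = 1"
      proof -
        have fa: "\<forall>g\<in>carrier G. \<chi>1 g = 1 \<and> \<chi>2 g = 1 \<and> \<chi>3 g = 1 \<longrightarrow> g = \<one>\<^bsub>G\<^esub>"
          using assms(9) by blast
        have sl: "\<forall>g\<in>carrier G. \<chi>1 g * \<chi>2 g * \<chi>3 g = 1"
          using assms(10) by (simp add: ac_simps)
        obtain a :: nat where "\<chi>1 (g1[^]\<^bsub>G\<^esub>a \<otimes>\<^bsub>G\<^esub> g2) \<noteq> 1 \<and> \<chi>2 (g1[^]\<^bsub>G\<^esub>a \<otimes>\<^bsub>G\<^esub> g2) \<noteq> 1 \<and> \<chi>3 (g1[^]\<^bsub>G\<^esub>a \<otimes>\<^bsub>G\<^esub> g2) \<noteq> 1"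
          using G.case3[OF g1 g2 m l uniq rep ch1 ch2 ch3 fa sl nt1 nt2 big hb ha] by blast
        then show ?thesis using famA by blast
      qed
      have k13: "?thesis" if hb: "\<chi>1 g2 = 1" and ha: "\<chi>3 g1 = 1"
      proof -
        have fa: "\<forall>g\<in>carrier G. \<chi>1 g = 1 \<and> \<chi>3 g = 1 \<and> \<chi>2 g = 1 \<longrightarrow> g = \<one>\<^bsub>G\<^esub>"
          using assms(9) by blast
        have sl: "\<forall>g\<in>carrier G. \<chi>1 g * \<chi>3 g * \<chi>2 g = 1"
          using assms(10) by (simp add: ac_simps)
        obtain a :: nat where "\<chi>1 (g1[^]\<^bsub>G\<^esub>a \<otimes>\<^bsub>G\<^esub> g2) \<noteq> 1 \<and> \<chi>3 (g1[^]\<^bsub>G\<^esub>a \<otimes>\<^bsub>G\<^esub> g2) \<noteq> 1 \<and> \<chi>2 (g1[^]\<^bsub>G\<^esub>a \<otimes>\<^bsub>G\<^esub> g2) \<noteq> 1"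
          using G.case3[OF g1 g2 m l uniq rep ch1 ch3 ch2 fa sl nt1 nt3 big hb ha] by blast
        then show ?thesis using famA by blast
      qed
      have k21: "?thesis" if hb: "\<chi>2 g2 = 1" and ha: "\<chi>1 g1 = 1"
      proof -
        have fa: "\<forall>g\<in>carrier G. \<chi>2 g = 1 \<and> \<chi>1 g = 1 \<and> \<chi>3 g = 1 \<longrightarrow> g = \<one>\<^bsub>G\<^esub>"
          using assms(9) by blast
        have sl: "\<forall>g\<in>carrier G. \<chi>2 g * \<chi>1 g * \<chi>3 g = 1"
          using assms(10) by (simp add: ac_simps)
        obtain a :: nat where "\<chi>2 (g1[^]\<^bsub>G\<^esub>a \<otimes>\<^bsub>G\<^esub> g2) \<noteq> 1 \<and> \<chi>1 (g1[^]\<^bsub>G\<^esub>a \<otimes>\<^bsub>G\<^esub> g2) \<noteq> 1 \<and> \<chi>3 (g1[^]\<^bsub>G\<^esub>a \<otimes>\<^bsub>G\<^esub> g2) \<noteq> 1"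
          using G.case3[OF g1 g2 m l uniq rep ch2 ch1 ch3 fa sl nt2 nt1 big hb ha] by blast
        then show ?thesis using famA by blast
      qed
      have k23: "?thesis" if hb: "\<chi>2 g2 = 1" and ha: "\<chi>3 g1 = 1"
      proof -
        have fa: "\<forall>g\<in>carrier G. \<chi>2 g = 1 \<and> \<chi>3 g = 1 \<and> \<chi>1 g = 1 \<longrightarrow> g = \<one>\<^bsub>G\<^esub>"
          using assms(9) by blast
        have sl: "\<forall>g\<in>carrier G. \<chi>2 g * \<chi>3 g * \<chi>1 g = 1"
          using assms(10) by (simp add: ac_simps)
        obtain a :: nat where "\<chi>2 (g1[^]\<^bsub>G\<^esub>a \<otimes>\<^bsub>G\<^esub> g2) \<noteq> 1 \<and> \<chi>3 (g1[^]\<^bsub>G\<^esub>a \<otimes>\<^bsub>G\<^esub> g2) \<noteq> 1 \<and> \<chi>1 (g1[^]\<^bsub>G\<^esub>a \<otimes>\<^bsub>G\<^esub> g2) \<noteq> 1"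
          using G.case3[OF g1 g2 m l uniq rep ch2 ch3 ch1 fa sl nt2 nt3 big hb ha] by blast
        then show ?thesis using famA by blast
      qed
      have k31: "?thesis" if hb: "\<chi>3 g2 = 1" and ha: "\<chi>1 g1 = 1"
      proof -
        have fa: "\<forall>g\<in>carrier G. \<chi>3 g = 1 \<and> \<chi>1 g = 1 \<and> \<chi>2 g = 1 \<longrightarrow> g = \<one>\<^bsub>G\<^esub>"
          using assms(9) by blast
        have sl: "\<forall>g\<in>carrier G. \<chi>3 g * \<chi>1 g * \<chi>2 g = 1"
          using assms(10) by (simp add: ac_simps)
        obtain a :: nat where "\<chi>3 (g1[^]\<^bsub>G\<^esub>a \<otimes>\<^bsub>G\<^esub> g2) \<noteq> 1 \<and> \<chi>1 (g1[^]\<^bsub>G\<^esub>a \<otimes>\<^bsub>G\<^esub> g2) \<noteq> 1 \<and> \<chi>2 (g1[^]\<^bsub>G\<^esub>a \<otimes>\<^bsub>G\<^esub> g2) \<noteq> 1"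
          using G.case3[OF g1 g2 m l uniq rep ch3 ch1 ch2 fa sl nt3 nt1 big hb ha] by blast
        then show ?thesis using famA by blast
      qed
      have k32: "?thesis" if hb: "\<chi>3 g2 = 1" and ha: "\<chi>2 g1 = 1"
      proof -
        have fa: "\<forall>g\<in>carrier G. \<chi>3 g = 1 \<and> \<chi>2 g = 1 \<and> \<chi>1 g = 1 \<longrightarrow> g = \<one>\<^bsub>G\<^esub>"
          using assms(9) by blast
        have sl: "\<forall>g\<in>carrier G. \<chi>3 g * \<chi>2 g * \<chi>1 g = 1"
          using assms(10) by (simp add: ac_simps)
        obtain a :: nat where "\<chi>3 (g1[^]\<^bsub>G\<^esub>a \<otimes>\<^bsub>G\<^esub> g2) \<noteq> 1 \<and> \<chi>2 (g1[^]\<^bsub>G\<^esub>a \<otimes>\<^bsub>G\<^esub> g2) \<noteq> 1 \<and> \<chi>1 (g1[^]\<^bsub>G\<^esub>a \<otimes>\<^bsub>G\<^esub> g2) \<noteq> 1"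
          using G.case3[OF g1 g2 m l uniq rep ch3 ch2 ch1 fa sl nt3 nt2 big hb ha] by blast
        then show ?thesis using famA by blast
      qed
      show ?thesis using c1' c2' n1 n2 n3 k12 k13 k21 k23 k31 k32 by blast
    qed
  qed
qed


end
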